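(* Let $g(t)$, $t\in[0,T)$, be the maximal Ricci flow solution on $S^1\times S^3$ starting from a metric $g_0=\phi^2dz^2+a^2\omega^1\otimes\omega^1+b^2\omega^2\otimes\omega^2+c^2\omega^3\otimes\omega^3$ with $a\le b\le c$ at $t=0$. Suppose that at time $t=0$ we have $0<a$ and $1\le \max_s\left(\frac{c}{a}\right)\le\lambda$ for some constant $\lambda\ge1$. Then $1\le \frac{c}{a}\le\lambda$ for all $(z,t)\in S^1\times[0,T)$.
   Context: $S^3=SU(2)$ carries a global left-invariant frame $E_1,E_2,E_3$ with $[E_i,E_j]=-2\epsilon_{ijk}E_k$ and dual coframe $\omega^i$; $z\in S^1=[0,2\pi)$ and $\phi,a,b,c$ are positive smooth $2\pi$-periodic functions. The Ricci flow $\partial_tg=-2\mathrm{Ric}(g)$ preserves this form, with $\phi,a,b,c$ depending on $(z,t)$; $s$ is the arclength coordinate $ds=\phi\,dz$. *)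

theory Defs
  imports "HOL-Analysis.Analysis"
begin

text \<open>Functions of (z,t): f z t, with z the S^1 coordinate (2pi-periodic) and t time.\<close>

definition dz :: "(real \<Rightarrow> real \<Rightarrow> real) \<Rightarrow> real \<Rightarrow> real \<Rightarrow> real" where
  "dz f z t = deriv (\<lambda>y. f y t) z"

definition dt :: "(real \<Rightarrow> real \<Rightarrow> real) \<Rightarrow> real \<Rightarrow> real \<Rightarrow> real" where
  "dt f z t = deriv (\<lambda>s. f z s) t"

definition ds :: "(real \<Rightarrow> real \<Rightarrow> real) \<Rightarrow> (real \<Rightarrow> real \<Rightarrow> real) \<Rightarrow> real \<Rightarrow> real \<Rightarrow> real" where
  "ds \<phi> f z t = dz f z t / \<phi> z t"

definition dss :: "(real \<Rightarrow> real \<Rightarrow> real) \<Rightarrow> (real \<Rightarrow> real \<Rightarrow> real) \<Rightarrow> real \<Rightarrow> real \<Rightarrow> real" where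
  "dss \<phi> f = ds \<phi> (ds \<phi> f)"

text \<open>Regularity of one metric component on S^1 x [0,T) (lifted 2pi-periodically to R).\<close>
definition regular_comp :: "real \<Rightarrow> (real \<Rightarrow> real \<Rightarrow> real) \<Rightarrow> bool" where
  "regular_comp T f \<longleftrightarrow>
     (\<forall>z t. 0 \<le> t \<and> t < T \<longrightarrow> f z t > 0 \<and> f (z + 2 * pi) t = f z t) \<and>
     (\<forall>z t. 0 \<le> t \<and> t < T \<longrightarrow>
        (\<lambda>y. f y t) differentiable (at z) \<and> (\<lambda>y. dz f y t) differentiable (at z)) \<and>
     (\<forall>z t. 0 < t \<and> t < T \<longrightarrow> (\<lambda>s. f z s) differentiable (at t)) \<and>
     continuous_on (UNIV \<times> {0..<T}) (\<lambda>p. f (fst p) (snd p)) \<and>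
     continuous_on (UNIV \<times> {0..<T}) (\<lambda>p. dz f (fst p) (snd p)) \<and>
     continuous_on (UNIV \<times> {0..<T}) (\<lambda>p. dz (dz f) (fst p) (snd p)) \<and>
     continuous_on (UNIV \<times> {0<..<T}) (\<lambda>p. dt f (fst p) (snd p))"

text \<open>Ricci flow dg/dt = -2 Ric(g) for g = phi^2 dz^2 + a^2 w1^2 + b^2 w2^2 + c^2 w3^2
  on S^1 x S^3, [E_i,E_j] = -2 eps_ijk E_k, written in the arclength derivative.\<close>
definition RF_solution ::
  "real \<Rightarrow> (real \<Rightarrow> real \<Rightarrow> real) \<Rightarrow> (real \<Rightarrow> real \<Rightarrow> real) \<Rightarrow>
   (real \<Rightarrow> real \<Rightarrow> real) \<Rightarrow> (real \<Rightarrow> real \<Rightarrow> real) \<Rightarrow> bool" where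
  "RF_solution T \<phi> a b c \<longleftrightarrow>
     regular_comp T \<phi> \<and> regular_comp T a \<and> regular_comp T b \<and> regular_comp T c \<and>
     (\<forall>z t. 0 < t \<and> t < T \<longrightarrow>
        dt a z t = dss \<phi> a z t + ds \<phi> a z t * (ds \<phi> b z t / b z t + ds \<phi> c z t / c z t)
                   + 2 * (((b z t)\<^sup>2 - (c z t)\<^sup>2)\<^sup>2 - (a z t) ^ 4) / (a z t * (b z t)\<^sup>2 * (c z t)\<^sup>2)
                   \<and>
        dt b z t = dss \<phi> b z t + ds \<phi> b z t * (ds \<phi> a z t / a z t + ds \<phi> c z t / c z t)
                   + 2 * (((a z t)\<^sup>2 - (c z t)\<^sup>2)\<^sup>2 - (b z t) ^ 4) / (b z t * (a z t)\<^sup>2 * (c z t)\<^sup>2)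
                   \<and>
        dt c z t = dss \<phi> c z t + ds \<phi> c z t * (ds \<phi> a z t / a z t + ds \<phi> b z t / b z t)
                   + 2 * (((a z t)\<^sup>2 - (b z t)\<^sup>2)\<^sup>2 - (c z t) ^ 4) / (c z t * (a z t)\<^sup>2 * (b z t)\<^sup>2)
                   \<and>
        dt \<phi> z t = \<phi> z t * (dss \<phi> a z t / a z t + dss \<phi> b z t / b z t + dss \<phi> c z t / c z t))"

end

theory Submission
  imports Defs
begin


lemma per_nat:
  assumes "\<forall>z. f (z + 2*pi) = (f z :: real)"
  shows "f (x + 2*pi*real n) = f x"
proof (induction n arbitrary: x)
  case 0 then show ?case by simp
next
  case (Suc n)
  have "f (x + 2*pi*real (Suc n)) = f ((x + 2*pi*real n) + 2*pi)" by (simp add: algebra_simps)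
  also have "\<dots> = f x" using assms Suc by simp
  finally show ?case .
qed

lemma periodic_reduce:
  assumes "\<forall>z. f (z + 2*pi) = (f z :: real)"
  shows "\<exists>y'\<in>{0..2*pi}. f y = f y'"
proof -
  define n where "n = floor (y / (2*pi))"
  define y' where "y' = y - 2*pi * of_int n"
  have "of_int n \<le> y/(2*pi)" "y/(2*pi) < of_int n + 1" unfolding n_def by linarith+
  then have "2*pi * of_int n \<le> y" "y < 2*pi * of_int n + 2*pi" using pi_gt_zero
    by (simp_all add: field_simps)
  then have y'r: "y' \<in> {0..2*pi}" unfolding y'_def by auto
  have "f y = f y'"
  proof (cases "n \<ge> 0")
    case True
    define m where "m = nat n"
    have "n = int m" using True unfolding m_def by simp
    then have "y = y' + 2*pi*real m" unfolding y'_def by simp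
    then show ?thesis using per_nat[OF assms] by simp
  next
    case False
    define m where "m = nat (-n)"
    have "n = - int m" using False unfolding m_def by simp
    then have "y' = y + 2*pi*real m" unfolding y'_def by simp
    then show ?thesis using per_nat[OF assms] by simp
  qed
  with y'r show ?thesis by blast
qed

lemma second_deriv_test:
  fixes g :: "real \<Rightarrow> real"
  assumes d1: "\<forall>y. g differentiable (at y)" and d2: "deriv g differentiable (at z)"
    and mn: "\<forall>y. g z \<le> g y"
  shows "deriv g z = 0 \<and> 0 \<le> deriv (deriv g) z"
proof -
  have D1: "\<And>y. (g has_real_derivative deriv g y) (at y)"
    using d1 DERIV_deriv_iff_real_differentiable by blast
  have z0: "deriv g z = 0"
    by (rule DERIV_local_min[OF D1[of z], of 1]) (use mn in auto)
  have D2: "(deriv g has_real_derivative deriv (deriv g) z) (at z)"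
    using d2 DERIV_deriv_iff_real_differentiable by blast
  have "0 \<le> deriv (deriv g) z"
  proof (rule ccontr)
    assume "\<not> ?thesis"
    then have "deriv (deriv g) z < 0" by simp
    from DERIV_neg_dec_right[OF D2 this] obtain d where d: "d > 0"
      "\<forall>h>0. h < d \<longrightarrow> deriv g z > deriv g (z + h)" by blast
    define h where "h = d/2"
    have h: "h > 0" "h < d" using d unfolding h_def by auto
    obtain \<xi> where xi: "\<xi> > z" "\<xi> < z + h" "g (z+h) - g z = (z + h - z) * deriv g \<xi>"
      using MVT2[of z "z+h" g "deriv g"] h D1 by auto
    have "deriv g \<xi> < 0" using d(2)[rule_format, of "\<xi> - z"] xi h z0 by auto
    then have "g (z+h) - g z < 0" using xi h by (simp add: mult_pos_neg)
    with mn[rule_format, of "z+h"] show False by linarith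
  qed
  with z0 show ?thesis by simp
qed


lemma max_princ:
  fixes W :: "real \<Rightarrow> real \<Rightarrow> real" and T :: real
  assumes cont: "continuous_on (UNIV \<times> {0..<T}) (\<lambda>p. W (fst p) (snd p))"
    and per: "\<forall>z t. 0 \<le> t \<and> t < T \<longrightarrow> W (z + 2*pi) t = W z t"
    and init: "\<forall>z. 0 \<le> W z 0"
    and diff: "\<forall>z t. 0 < t \<and> t < T \<longrightarrow> (\<lambda>s. W z s) differentiable (at t)"
    and key: "\<forall>T'. 0 < T' \<and> T' < T \<longrightarrow> (\<exists>M\<ge>0. \<forall>z t. 0 < t \<and> t \<le> T' \<and> W z t < 0 \<and>
               (\<forall>y. W z t \<le> W y t) \<longrightarrow> M * W z t \<le> deriv (\<lambda>s. W z s) t)"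
  shows "\<forall>z t. 0 \<le> t \<and> t < T \<longrightarrow> 0 \<le> W z t"
proof (intro allI impI)
  fix z1 t1 assume t1: "0 \<le> t1 \<and> t1 < T"
  show "0 \<le> W z1 t1"
  proof (rule ccontr)
    assume neg: "\<not> 0 \<le> W z1 t1"
    have t1p: "0 < t1" using neg init t1 by (cases "t1 = 0") auto
    obtain M where M: "M \<ge> 0" and Mk: "\<And>z t. 0 < t \<Longrightarrow> t \<le> t1 \<Longrightarrow> W z t < 0 \<Longrightarrow>
               (\<forall>y. W z t \<le> W y t) \<Longrightarrow> M * W z t \<le> deriv (\<lambda>s. W z s) t"
      using key[rule_format, of t1] t1 t1p by auto
    define L where "L = M + 1"
    define e where "e = - W z1 t1 / (2 * exp (L * t1))"
    have "W z1 t1 / (2 * exp (L * t1)) < 0" by (rule divide_neg_pos) (use neg in auto)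
    then have ep: "e > 0" unfolding e_def by simp
    define V where "V = (\<lambda>z t. W z t + e * exp (L * t))"
    have V1: "V z1 t1 < 0" using neg unfolding V_def e_def by simp
    have perV: "\<And>t. 0 \<le> t \<Longrightarrow> t < T \<Longrightarrow> \<forall>z. V (z + 2*pi) t = V z t"
      unfolding V_def using per by simp
    have contV: "continuous_on (UNIV \<times> {0..<T}) (\<lambda>p. V (fst p) (snd p))"
      unfolding V_def by (intro continuous_intros cont)
    define S where "S = {0..2*pi} \<times> {0..t1}"
    have SS: "S \<subseteq> UNIV \<times> {0..<T}" unfolding S_def using t1 by auto
    define K where "K = {p \<in> S. V (fst p) (snd p) \<le> 0}"
    have "closed K" unfolding K_def
      by (rule continuous_on_closed_Collect_le)
         (use continuous_on_subset[OF contV SS] in \<open>auto simp: S_def closed_Times\<close>)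
    moreover have "compact S" unfolding S_def by (simp add: compact_Times)
    moreover have "K = S \<inter> K" unfolding K_def by auto
    ultimately have "compact K" by (metis compact_Int_closed)
    then have cSt: "compact (snd ` K)" by (intro compact_continuous_image continuous_intros)
    obtain z1' where z1': "z1' \<in> {0..2*pi}" "V z1 t1 = V z1' t1"
      using periodic_reduce[OF perV[of t1]] t1 by blast
    have "(z1', t1) \<in> K" unfolding K_def S_def using z1' V1 t1 by auto
    then have ne: "snd ` K \<noteq> {}" by auto
    have bdd: "bdd_below (snd ` K)" unfolding K_def S_def by (rule bdd_belowI[of _ 0]) auto
    define t0 where "t0 = Inf (snd ` K)"
    have "t0 \<in> snd ` K" unfolding t0_def
      using closed_contains_Inf[OF ne bdd compact_imp_closed[OF cSt]] .
    then obtain z0 where z0K: "(z0, t0) \<in> K" by auto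
    then have z0: "z0 \<in> {0..2*pi}" "0 \<le> t0" "t0 \<le> t1" "V z0 t0 \<le> 0"
      unfolding K_def S_def by auto
    have below: "\<And>t y. 0 \<le> t \<Longrightarrow> t < t0 \<Longrightarrow> y \<in> {0..2*pi} \<Longrightarrow> 0 < V y t"
    proof (rule ccontr)
      fix t y assume "0 \<le> t" "t < t0" "y \<in> {0..2*pi}" "\<not> 0 < V y t"
      then have "(y, t) \<in> K" unfolding K_def S_def using z0 by auto
      then have "t0 \<le> t" unfolding t0_def using bdd by (metis cInf_lower image_eqI snd_conv)
      with \<open>t < t0\<close> show False by simp
    qed
    have t0p: "0 < t0"
    proof (rule ccontr)
      assume "\<not> 0 < t0"
      then have "t0 = 0" using z0 by simp
      then have "V z0 t0 = W z0 0 + e" unfolding V_def by simp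
      then show False using z0 init[rule_format, of z0] ep by simp
    qed
    have geq: "0 \<le> V y t0" for y
    proof -
      obtain y' where y': "y' \<in> {0..2*pi}" "V y t0 = V y' t0"
        using periodic_reduce[OF perV[of t0]] z0 t1 by fastforce
      have cl: "continuous_on {0..t0} (\<lambda>t. V y' t)"
      proof -
        have "continuous_on {0..t0} (\<lambda>t. (y', t))" by (intro continuous_intros)
        moreover have "(\<lambda>t. (y', t)) ` {0..t0} \<subseteq> UNIV \<times> {0..<T}" using z0 t1 by auto
        ultimately show ?thesis using continuous_on_compose2[OF contV] by force
      qed
      have "closed {t \<in> {0..t0}. (\<lambda>t. 0) t \<le> V y' t}"
        by (rule continuous_on_closed_Collect_le) (auto intro: cl)
      moreover have "{0..<t0} \<subseteq> {t \<in> {0..t0}. (\<lambda>t. 0) t \<le> V y' t}"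
        using below y' by (auto intro: less_imp_le)
      ultimately have "closure {0..<t0} \<subseteq> {t \<in> {0..t0}. (\<lambda>t. 0) t \<le> V y' t}"
        by (rule closure_minimal[rotated])
      then have "t0 \<in> {t \<in> {0..t0}. (\<lambda>t. 0) t \<le> V y' t}"
        using t0p closure_atLeastLessThan[OF t0p] by (metis atLeastAtMost_iff order_refl less_imp_le subsetD)
      then show ?thesis using y' by simp
    qed
    have V0: "V z0 t0 = 0" using geq[of z0] z0 by simp
    have "e * exp (L * t0) > 0" using ep by simp
    then have Wneg: "W z0 t0 < 0" using V0 unfolding V_def by linarith
    have Wmin: "\<forall>y. W z0 t0 \<le> W y t0"
    proof
      fix y show "W z0 t0 \<le> W y t0" using geq[of y] V0 unfolding V_def by linarith
    qed
    have Dk: "M * W z0 t0 \<le> deriv (\<lambda>s. W z0 s) t0" using Mk[OF t0p z0(3) Wneg Wmin] .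
    have DW: "((\<lambda>s. W z0 s) has_real_derivative deriv (\<lambda>s. W z0 s) t0) (at t0)"
      using diff t0p z0 t1 DERIV_deriv_iff_real_differentiable by force
    have DV: "((\<lambda>s. V z0 s) has_real_derivative
               (deriv (\<lambda>s. W z0 s) t0 + e * (exp (L * t0) * L))) (at t0)"
      unfolding V_def by (auto intro!: derivative_eq_intros DW)
    have WV: "W z0 t0 = - e * exp (L * t0)" using V0 unfolding V_def by simp
    have "deriv (\<lambda>s. W z0 s) t0 + e * (exp (L * t0) * L) \<ge> M * W z0 t0 + e * (exp (L * t0) * L)"
      using Dk by simp
    also have "M * W z0 t0 + e * (exp (L * t0) * L) = e * exp (L * t0)"
      unfolding WV L_def by (simp add: algebra_simps)
    finally have pos: "deriv (\<lambda>s. W z0 s) t0 + e * (exp (L * t0) * L) > 0"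
      using ep by (smt (verit) exp_gt_zero mult_pos_pos)
    obtain d where d: "d > 0" "\<forall>h>0. h < d \<longrightarrow> V z0 (t0 - h) < V z0 t0"
      using DERIV_pos_inc_left[OF DV pos] by blast
    define h where "h = min (d/2) t0"
    have h: "h > 0" "h < d" "h \<le> t0" using d t0p unfolding h_def by auto
    have "V z0 (t0 - h) < 0" using d(2) h V0 by auto
    moreover have "0 < V z0 (t0 - h)" using below[of "t0 - h" z0] h z0 by auto
    ultimately show False by simp
  qed
qed




lemma alg_pair:
  fixes x0 y0 p p1 x1 y1 x2 y2 Q :: real
  assumes "x0 > 0" "y0 > 0" "p > 0" "y1 = x1*y0/x0"
  shows "(((y2*p - y1*p1)/(p*p))/p + (y1/p)*((x1/p)/x0 + Q))/y0
       - (((x2*p - x1*p1)/(p*p))/p + (x1/p)*((y1/p)/y0 + Q))/x0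
       = ((y2*y0 - y1*y1)/(y0*y0) - (x2*x0 - x1*x1)/(x0*x0)) / (p*p)"
  using assms(1-3) unfolding assms(4) by (simp add: field_simps)


lemma pair_step:
  fixes \<phi> x y :: "real \<Rightarrow> real \<Rightarrow> real" and K Q Rx Ry t z :: real
  assumes px: "\<forall>u. 0 < x u t" and py: "\<forall>u. 0 < y u t" and pp: "0 < \<phi> z t"
    and dx: "\<forall>u. (\<lambda>v. x v t) differentiable (at u)" "\<forall>u. (\<lambda>v. dz x v t) differentiable (at u)"
    and dy: "\<forall>u. (\<lambda>v. y v t) differentiable (at u)" "\<forall>u. (\<lambda>v. dz y v t) differentiable (at u)"
    and dp: "(\<lambda>v. \<phi> v t) differentiable (at z)"
    and tx: "(\<lambda>s. x z s) differentiable (at t)" and ty: "(\<lambda>s. y z s) differentiable (at t)"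
    and ex: "dt x z t = dss \<phi> x z t + ds \<phi> x z t * (ds \<phi> y z t / y z t + Q) + Rx"
    and ey: "dt y z t = dss \<phi> y z t + ds \<phi> y z t * (ds \<phi> x z t / x z t + Q) + Ry"
    and mn: "\<forall>u. K + ln (y z t) - ln (x z t) \<le> K + ln (y u t) - ln (x u t)"
  shows "Ry / y z t - Rx / x z t \<le> deriv (\<lambda>s. K + ln (y z s) - ln (x z s)) t"
proof -
  have pxz: "0 < x z t" and pyz: "0 < y z t" using px py by auto
  have Fx: "\<And>u. ((\<lambda>v. x v t) has_real_derivative dz x u t) (at u)"
    unfolding dz_def using dx DERIV_deriv_iff_real_differentiable by blast
  have Fy: "\<And>u. ((\<lambda>v. y v t) has_real_derivative dz y u t) (at u)"
    unfolding dz_def using dy DERIV_deriv_iff_real_differentiable by blast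
  have Fx1: "((\<lambda>v. dz x v t) has_real_derivative dz (dz x) z t) (at z)"
    unfolding dz_def[of "dz x"] using dx DERIV_deriv_iff_real_differentiable by blast
  have Fy1: "((\<lambda>v. dz y v t) has_real_derivative dz (dz y) z t) (at z)"
    unfolding dz_def[of "dz y"] using dy DERIV_deriv_iff_real_differentiable by blast
  have Fp: "((\<lambda>v. \<phi> v t) has_real_derivative dz \<phi> z t) (at z)"
    unfolding dz_def using dp DERIV_deriv_iff_real_differentiable by blast
  have dssx: "dss \<phi> x z t = ((dz (dz x) z t * \<phi> z t - dz x z t * dz \<phi> z t) / (\<phi> z t * \<phi> z t)) / \<phi> z t"
  proof -
    have "((\<lambda>v. dz x v t / \<phi> v t) has_real_derivative
        (dz (dz x) z t * \<phi> z t - dz x z t * dz \<phi> z t) / (\<phi> z t * \<phi> z t)) (at z)"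
      by (rule DERIV_divide[OF Fx1 Fp]) (use pp in simp)
    then have "deriv (\<lambda>v. dz x v t / \<phi> v t) z = (dz (dz x) z t * \<phi> z t - dz x z t * dz \<phi> z t) / (\<phi> z t * \<phi> z t)"
      by (rule DERIV_imp_deriv)
    then show ?thesis unfolding dss_def ds_def[of \<phi> "ds \<phi> x"] dz_def[of "ds \<phi> x"]
      by (simp add: ds_def)
  qed
  have dssy: "dss \<phi> y z t = ((dz (dz y) z t * \<phi> z t - dz y z t * dz \<phi> z t) / (\<phi> z t * \<phi> z t)) / \<phi> z t"
  proof -
    have "((\<lambda>v. dz y v t / \<phi> v t) has_real_derivative
        (dz (dz y) z t * \<phi> z t - dz y z t * dz \<phi> z t) / (\<phi> z t * \<phi> z t)) (at z)"
      by (rule DERIV_divide[OF Fy1 Fp]) (use pp in simp)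
    then have "deriv (\<lambda>v. dz y v t / \<phi> v t) z = (dz (dz y) z t * \<phi> z t - dz y z t * dz \<phi> z t) / (\<phi> z t * \<phi> z t)"
      by (rule DERIV_imp_deriv)
    then show ?thesis unfolding dss_def ds_def[of \<phi> "ds \<phi> y"] dz_def[of "ds \<phi> y"]
      by (simp add: ds_def)
  qed
  define g where "g = (\<lambda>u. K + ln (y u t) - ln (x u t))"
  have Fg: "\<And>u. (g has_real_derivative (dz y u t / y u t - dz x u t / x u t)) (at u)"
  proof -
    fix u
    have a: "((\<lambda>v. ln (y v t)) has_real_derivative (1 / y u t) * dz y u t) (at u)"
      by (rule DERIV_chain2[OF DERIV_ln_divide Fy]) (use py in auto)
    have b: "((\<lambda>v. ln (x v t)) has_real_derivative (1 / x u t) * dz x u t) (at u)"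
      by (rule DERIV_chain2[OF DERIV_ln_divide Fx]) (use px in auto)
    have "(g has_real_derivative (0 + (1 / y u t) * dz y u t - (1 / x u t) * dz x u t)) (at u)"
      unfolding g_def by (intro DERIV_diff DERIV_add DERIV_const a b)
    then show "(g has_real_derivative (dz y u t / y u t - dz x u t / x u t)) (at u)" by simp
  qed
  have dg: "deriv g = (\<lambda>u. dz y u t / y u t - dz x u t / x u t)"
    using Fg DERIV_imp_deriv by blast
  have Fg2: "((\<lambda>u. dz y u t / y u t - dz x u t / x u t) has_real_derivative
      ((dz (dz y) z t * y z t - dz y z t * dz y z t) / (y z t * y z t)
     - (dz (dz x) z t * x z t - dz x z t * dz x z t) / (x z t * x z t))) (at z)"
    using px[rule_format, of z] py[rule_format, of z]
    by (intro DERIV_diff DERIV_divide Fy1 Fx1 Fy Fx) auto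
  have st: "deriv g z = 0 \<and> 0 \<le> deriv (deriv g) z"
  proof (rule second_deriv_test)
    show "\<forall>u. g differentiable (at u)" using Fg real_differentiable_def by blast
    show "deriv g differentiable (at z)" unfolding dg using Fg2 real_differentiable_def by blast
    show "\<forall>u. g z \<le> g u" using mn unfolding g_def by simp
  qed
  have e1: "dz y z t / y z t - dz x z t / x z t = 0" using st dg by simp
  have e2: "0 \<le> (dz (dz y) z t * y z t - dz y z t * dz y z t) / (y z t * y z t)
     - (dz (dz x) z t * x z t - dz x z t * dz x z t) / (x z t * x z t)"
    using st DERIV_imp_deriv[OF Fg2] unfolding dg by simp
  have y1: "dz y z t = dz x z t * y z t / x z t"
    using e1 pxz pyz by (simp add: field_simps)
  have tder: "deriv (\<lambda>s. K + ln (y z s) - ln (x z s)) t = dt y z t / y z t - dt x z t / x z t"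
  proof -
    have Tx: "((\<lambda>s. x z s) has_real_derivative dt x z t) (at t)"
      unfolding dt_def using tx DERIV_deriv_iff_real_differentiable by blast
    have Ty: "((\<lambda>s. y z s) has_real_derivative dt y z t) (at t)"
      unfolding dt_def using ty DERIV_deriv_iff_real_differentiable by blast
    have a: "((\<lambda>s. ln (y z s)) has_real_derivative (1 / y z t) * dt y z t) (at t)"
      by (rule DERIV_chain2[OF DERIV_ln_divide Ty]) (use py in auto)
    have b: "((\<lambda>s. ln (x z s)) has_real_derivative (1 / x z t) * dt x z t) (at t)"
      by (rule DERIV_chain2[OF DERIV_ln_divide Tx]) (use px in auto)
    have "((\<lambda>s. K + ln (y z s) - ln (x z s)) has_real_derivative (0 + (1 / y z t) * dt y z t - (1 / x z t) * dt x z t)) (at t)"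
      by (intro DERIV_diff DERIV_add DERIV_const a b)
    then show ?thesis using DERIV_imp_deriv by fastforce
  qed
  have key: "dt y z t / y z t - dt x z t / x z t - (Ry / y z t - Rx / x z t) =
     ((dz (dz y) z t * y z t - dz y z t * dz y z t) / (y z t * y z t)
     - (dz (dz x) z t * x z t - dz x z t * dz x z t) / (x z t * x z t)) / (\<phi> z t * \<phi> z t)"
  proof -
    have "dt y z t / y z t - dt x z t / x z t - (Ry / y z t - Rx / x z t) =
      (dss \<phi> y z t + ds \<phi> y z t * (ds \<phi> x z t / x z t + Q)) / y z t
      - (dss \<phi> x z t + ds \<phi> x z t * (ds \<phi> y z t / y z t + Q)) / x z t"
      unfolding ex ey using pxz pyz by (simp add: field_simps)
    also have "\<dots> = ((dz (dz y) z t * y z t - dz y z t * dz y z t) / (y z t * y z t)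
     - (dz (dz x) z t * x z t - dz x z t * dz x z t) / (x z t * x z t)) / (\<phi> z t * \<phi> z t)"
      unfolding dssx dssy ds_def
      by (rule alg_pair) (use pxz pyz pp y1 in auto)
    finally show ?thesis .
  qed
  have "0 \<le> dt y z t / y z t - dt x z t / x z t - (Ry / y z t - Rx / x z t)"
    unfolding key using e2 by simp
  then show ?thesis unfolding tder by simp
qed




lemma react_ab:
  fixes a b c :: real assumes "a > 0" "b > 0" "c > 0"
  shows "2 * ((a\<^sup>2 - c\<^sup>2)\<^sup>2 - b ^ 4) / (b * a\<^sup>2 * c\<^sup>2) / (b) - 2 * ((b\<^sup>2 - c\<^sup>2)\<^sup>2 - a ^ 4) / (a * b\<^sup>2 * c\<^sup>2) / (a)
    = 4 * (a\<^sup>2 - b\<^sup>2) * (a\<^sup>2 + b\<^sup>2 - c\<^sup>2) / (a\<^sup>2 * b\<^sup>2 * c\<^sup>2)"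
proof -
  have 1: "2 * ((a\<^sup>2 - c\<^sup>2)\<^sup>2 - b ^ 4) / (b * a\<^sup>2 * c\<^sup>2) / (b) = 2 * ((a\<^sup>2 - c\<^sup>2)\<^sup>2 - b ^ 4) / (a\<^sup>2 * b\<^sup>2 * c\<^sup>2)"
    using assms by (simp add: power2_eq_square mult_ac)
  have 2: "2 * ((b\<^sup>2 - c\<^sup>2)\<^sup>2 - a ^ 4) / (a * b\<^sup>2 * c\<^sup>2) / (a) = 2 * ((b\<^sup>2 - c\<^sup>2)\<^sup>2 - a ^ 4) / (a\<^sup>2 * b\<^sup>2 * c\<^sup>2)"
    using assms by (simp add: power2_eq_square mult_ac)
  have 3: "2 * ((a\<^sup>2 - c\<^sup>2)\<^sup>2 - b ^ 4) - 2 * ((b\<^sup>2 - c\<^sup>2)\<^sup>2 - a ^ 4) = 4 * (a\<^sup>2 - b\<^sup>2) * (a\<^sup>2 + b\<^sup>2 - c\<^sup>2)"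
    by (simp add: power2_eq_square power4_eq_xxxx algebra_simps)
  show ?thesis unfolding 1 2 using 3 by (metis diff_divide_distrib)
qed

lemma react_bc:
  fixes a b c :: real assumes "a > 0" "b > 0" "c > 0"
  shows "2 * ((a\<^sup>2 - b\<^sup>2)\<^sup>2 - c ^ 4) / (c * a\<^sup>2 * b\<^sup>2) / (c) - 2 * ((a\<^sup>2 - c\<^sup>2)\<^sup>2 - b ^ 4) / (b * a\<^sup>2 * c\<^sup>2) / (b)
    = 4 * (c\<^sup>2 - b\<^sup>2) * (a\<^sup>2 - b\<^sup>2 - c\<^sup>2) / (a\<^sup>2 * b\<^sup>2 * c\<^sup>2)"
proof -
  have 1: "2 * ((a\<^sup>2 - b\<^sup>2)\<^sup>2 - c ^ 4) / (c * a\<^sup>2 * b\<^sup>2) / (c) = 2 * ((a\<^sup>2 - b\<^sup>2)\<^sup>2 - c ^ 4) / (a\<^sup>2 * b\<^sup>2 * c\<^sup>2)"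
    using assms by (simp add: power2_eq_square mult_ac)
  have 2: "2 * ((a\<^sup>2 - c\<^sup>2)\<^sup>2 - b ^ 4) / (b * a\<^sup>2 * c\<^sup>2) / (b) = 2 * ((a\<^sup>2 - c\<^sup>2)\<^sup>2 - b ^ 4) / (a\<^sup>2 * b\<^sup>2 * c\<^sup>2)"
    using assms by (simp add: power2_eq_square mult_ac)
  have 3: "2 * ((a\<^sup>2 - b\<^sup>2)\<^sup>2 - c ^ 4) - 2 * ((a\<^sup>2 - c\<^sup>2)\<^sup>2 - b ^ 4) = 4 * (c\<^sup>2 - b\<^sup>2) * (a\<^sup>2 - b\<^sup>2 - c\<^sup>2)"
    by (simp add: power2_eq_square power4_eq_xxxx algebra_simps)
  show ?thesis unfolding 1 2 using 3 by (metis diff_divide_distrib)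
qed

lemma react_ca:
  fixes a b c :: real assumes "a > 0" "b > 0" "c > 0"
  shows "2 * ((b\<^sup>2 - c\<^sup>2)\<^sup>2 - a ^ 4) / (a * b\<^sup>2 * c\<^sup>2) / (a) - 2 * ((a\<^sup>2 - b\<^sup>2)\<^sup>2 - c ^ 4) / (c * a\<^sup>2 * b\<^sup>2) / (c)
    = 4 * (c\<^sup>2 - a\<^sup>2) * (a\<^sup>2 - b\<^sup>2 + c\<^sup>2) / (a\<^sup>2 * b\<^sup>2 * c\<^sup>2)"
proof -
  have 1: "2 * ((b\<^sup>2 - c\<^sup>2)\<^sup>2 - a ^ 4) / (a * b\<^sup>2 * c\<^sup>2) / (a) = 2 * ((b\<^sup>2 - c\<^sup>2)\<^sup>2 - a ^ 4) / (a\<^sup>2 * b\<^sup>2 * c\<^sup>2)"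
    using assms by (simp add: power2_eq_square mult_ac)
  have 2: "2 * ((a\<^sup>2 - b\<^sup>2)\<^sup>2 - c ^ 4) / (c * a\<^sup>2 * b\<^sup>2) / (c) = 2 * ((a\<^sup>2 - b\<^sup>2)\<^sup>2 - c ^ 4) / (a\<^sup>2 * b\<^sup>2 * c\<^sup>2)"
    using assms by (simp add: power2_eq_square mult_ac)
  have 3: "2 * ((b\<^sup>2 - c\<^sup>2)\<^sup>2 - a ^ 4) - 2 * ((a\<^sup>2 - b\<^sup>2)\<^sup>2 - c ^ 4) = 4 * (c\<^sup>2 - a\<^sup>2) * (a\<^sup>2 - b\<^sup>2 + c\<^sup>2)"
    by (simp add: power2_eq_square power4_eq_xxxx algebra_simps)
  show ?thesis unfolding 1 2 using 3 by (metis diff_divide_distrib)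
qed

lemma bound_ab:
  fixes a b c B :: real assumes "a > 0" "b > 0" "c > 0"
    and w: "0 + ln b - ln a < 0" and hB: "(a\<^sup>2 + b\<^sup>2 + c\<^sup>2) / (b\<^sup>2 * c\<^sup>2) \<le> B"
  shows "8 * B * (0 + ln b - ln a) \<le> 4 * (a\<^sup>2 - b\<^sup>2) * (a\<^sup>2 + b\<^sup>2 - c\<^sup>2) / (a\<^sup>2 * b\<^sup>2 * c\<^sup>2)"
proof -
  define u where "u = ln b - ln a"
  have u: "u < 0" using w unfolding u_def by simp
  have ba: "b = a * exp u" unfolding u_def using assms by (simp add: exp_diff)
  have "1 + 2 * u \<le> exp (2 * u)" using exp_ge_add_one_self[of "2 * u"] by simp
  also have "exp (2 * u) = (exp u)\<^sup>2" by (simp add: power2_eq_square exp_add[symmetric])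
  finally have ev: "1 + 2 * u \<le> (exp u)\<^sup>2" .
  define D where "D = a\<^sup>2 - b\<^sup>2"
  have m1: "a\<^sup>2 * (1 + 2 * u) \<le> a\<^sup>2 * (exp u)\<^sup>2" by (rule mult_left_mono) (use ev in auto)
  have m2: "b\<^sup>2 = a\<^sup>2 * (exp u)\<^sup>2" by (simp add: ba power_mult_distrib)
  have Dle: "D \<le> -2 * u * a\<^sup>2" unfolding D_def using m1 m2 by (simp add: algebra_simps)
  have "b < a" using ba u assms by (simp add: mult_less_cancel_left1)
  then have D0: "0 \<le> D" unfolding D_def using assms by (simp add: power_mono)
  define P where "P = a\<^sup>2 + b\<^sup>2 + c\<^sup>2"
  define E where "E = a\<^sup>2 * b\<^sup>2 * c\<^sup>2"
  have E0: "E > 0" unfolding E_def using assms by simp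
  have N: "- P \<le> a\<^sup>2 + b\<^sup>2 - c\<^sup>2" unfolding P_def by simp
  have P0: "0 \<le> P" unfolding P_def by simp
  have "4 * D * (a\<^sup>2 + b\<^sup>2 - c\<^sup>2) / E \<ge> 4 * D * (- P) / E"
    using N D0 E0 by (intro divide_right_mono mult_left_mono) auto
  moreover have "4 * D * P / E \<le> 4 * (-2 * u*a\<^sup>2) * P / E"
    using Dle P0 E0 by (intro divide_right_mono mult_right_mono) auto
  moreover have "4 * (-2 * u*a\<^sup>2) * P / E = -8 * u * (P / (b\<^sup>2 * c\<^sup>2))"
    unfolding E_def using assms by (simp add: field_simps)
  moreover have "-8 * u * (P / (b\<^sup>2 * c\<^sup>2)) \<le> -8 * u * B"
    using hB u unfolding P_def by (intro mult_left_mono) auto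
  ultimately have "4 * D * (a\<^sup>2 + b\<^sup>2 - c\<^sup>2) / E \<ge> 8 * B * u" by (simp add: algebra_simps)
  then show ?thesis unfolding D_def E_def u_def by (simp add: mult.assoc)
qed



lemma reg_unfold:
  assumes "regular_comp T f"
  shows "\<And>z t. 0 \<le> t \<Longrightarrow> t < T \<Longrightarrow> 0 < f z t"
    and "\<And>z t. 0 \<le> t \<Longrightarrow> t < T \<Longrightarrow> f (z + 2*pi) t = f z t"
    and "\<And>z t. 0 \<le> t \<Longrightarrow> t < T \<Longrightarrow> (\<lambda>y. f y t) differentiable (at z)"
    and "\<And>z t. 0 \<le> t \<Longrightarrow> t < T \<Longrightarrow> (\<lambda>y. dz f y t) differentiable (at z)"
    and "\<And>z t. 0 < t \<Longrightarrow> t < T \<Longrightarrow> (\<lambda>s. f z s) differentiable (at t)"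
    and "continuous_on (UNIV \<times> {0..<T}) (\<lambda>p. f (fst p) (snd p))"
  using assms unfolding regular_comp_def by auto

lemma reg_W:
  assumes rx: "regular_comp T x" and ry: "regular_comp T y"
  shows "continuous_on (UNIV \<times> {0..<T}) (\<lambda>p. K + ln (y (fst p) (snd p)) - ln (x (fst p) (snd p)))"
    and "\<forall>z t. 0 \<le> t \<and> t < T \<longrightarrow> K + ln (y (z + 2*pi) t) - ln (x (z + 2*pi) t) = K + ln (y z t) - ln (x z t)"
    and "\<forall>z t. 0 < t \<and> t < T \<longrightarrow> (\<lambda>s. K + ln (y z s) - ln (x z s)) differentiable (at t)"
proof -
  note X = reg_unfold[OF rx] and Y = reg_unfold[OF ry]
  show "continuous_on (UNIV \<times> {0..<T}) (\<lambda>p. K + ln (y (fst p) (snd p)) - ln (x (fst p) (snd p)))"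
    using X(1) Y(1) by (intro continuous_intros X(6) Y(6)) (auto simp: less_imp_neq[symmetric])
  show "\<forall>z t. 0 \<le> t \<and> t < T \<longrightarrow> K + ln (y (z + 2*pi) t) - ln (x (z + 2*pi) t) = K + ln (y z t) - ln (x z t)"
    using X(2) Y(2) by simp
  show "\<forall>z t. 0 < t \<and> t < T \<longrightarrow> (\<lambda>s. K + ln (y z s) - ln (x z s)) differentiable (at t)"
  proof (intro allI impI)
    fix z t assume t: "0 < t \<and> t < T"
    have Tx: "((\<lambda>s. x z s) has_real_derivative deriv (\<lambda>s. x z s) t) (at t)"
      using X(5) t DERIV_deriv_iff_real_differentiable by blast
    have Ty: "((\<lambda>s. y z s) has_real_derivative deriv (\<lambda>s. y z s) t) (at t)"
      using Y(5) t DERIV_deriv_iff_real_differentiable by blast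
    have a: "((\<lambda>s. ln (y z s)) has_real_derivative (1 / y z t) * deriv (\<lambda>s. y z s) t) (at t)"
      by (rule DERIV_chain2[OF DERIV_ln_divide Ty]) (use Y(1) t in auto)
    have b: "((\<lambda>s. ln (x z s)) has_real_derivative (1 / x z t) * deriv (\<lambda>s. x z s) t) (at t)"
      by (rule DERIV_chain2[OF DERIV_ln_divide Tx]) (use X(1) t in auto)
    have "((\<lambda>s. K + ln (y z s) - ln (x z s)) has_real_derivative
       (0 + (1 / y z t) * deriv (\<lambda>s. y z s) t - (1 / x z t) * deriv (\<lambda>s. x z s) t)) (at t)"
      by (intro DERIV_diff DERIV_add DERIV_const a b)
    then show "(\<lambda>s. K + ln (y z s) - ln (x z s)) differentiable (at t)"
      using real_differentiable_def by blast
  qed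
qed

lemma periodic_bound:
  fixes H :: "real \<Rightarrow> real \<Rightarrow> real"
  assumes cont: "continuous_on (UNIV \<times> {0..<T}) (\<lambda>p. H (fst p) (snd p))"
    and per: "\<forall>z t. 0 \<le> t \<and> t < T \<longrightarrow> H (z + 2*pi) t = H z t"
    and T': "T' < T"
  shows "\<exists>B. \<forall>z t. 0 \<le> t \<and> t \<le> T' \<longrightarrow> H z t \<le> B"
proof -
  define S where "S = {0..2*pi} \<times> {0..T'}"
  have "compact S" unfolding S_def by (simp add: compact_Times)
  moreover have "continuous_on S (\<lambda>p. H (fst p) (snd p))"
    by (rule continuous_on_subset[OF cont]) (use T' in \<open>auto simp: S_def\<close>)
  ultimately have "compact ((\<lambda>p. H (fst p) (snd p)) ` S)" by (simp add: compact_continuous_image)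
  then have "bounded ((\<lambda>p. H (fst p) (snd p)) ` S)" by (rule compact_imp_bounded)
  then obtain B where B: "\<forall>v\<in>(\<lambda>p. H (fst p) (snd p)) ` S. norm v \<le> B" by (auto simp: bounded_iff)
  have "H z t \<le> B" if tt: "0 \<le> t" "t \<le> T'" for z t
  proof -
    obtain z' where z': "z' \<in> {0..2*pi}" "H z t = H z' t"
      using periodic_reduce[of "\<lambda>z. H z t" z] per tt T' by auto
    then have "(z', t) \<in> S" unfolding S_def using tt by auto
    then have "norm (H z' t) \<le> B" using B by force
    then show ?thesis using z' by simp
  qed
  then show ?thesis by blast
qed

theorem lemma3p2:
  fixes \<phi> a b c :: "real \<Rightarrow> real \<Rightarrow> real" and T lam :: real
  assumes "T > 0"
    and "RF_solution T \<phi> a b c"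
    and "\<forall>z. a z 0 \<le> b z 0 \<and> b z 0 \<le> c z 0"
    and "lam \<ge> 1"
    and "\<forall>z. 0 < a z 0"
    and "\<exists>z. 1 \<le> c z 0 / a z 0"
    and "\<forall>z. c z 0 / a z 0 \<le> lam"
  shows "\<forall>z t. 0 \<le> t \<and> t < T \<longrightarrow> 1 \<le> c z t / a z t \<and> c z t / a z t \<le> lam"
proof -
  have rp: "regular_comp T \<phi>" and ra: "regular_comp T a" and rb: "regular_comp T b"
    and rc: "regular_comp T c" using assms(2) unfolding RF_solution_def by auto
  have eqs: "\<And>z t. 0 < t \<Longrightarrow> t < T \<Longrightarrow>
        dt a z t = dss \<phi> a z t + ds \<phi> a z t * (ds \<phi> b z t / b z t + ds \<phi> c z t / c z t)
                   + 2 * (((b z t)\<^sup>2 - (c z t)\<^sup>2)\<^sup>2 - (a z t) ^ 4) / (a z t * (b z t)\<^sup>2 * (c z t)\<^sup>2)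
                   \<and>
        dt b z t = dss \<phi> b z t + ds \<phi> b z t * (ds \<phi> a z t / a z t + ds \<phi> c z t / c z t)
                   + 2 * (((a z t)\<^sup>2 - (c z t)\<^sup>2)\<^sup>2 - (b z t) ^ 4) / (b z t * (a z t)\<^sup>2 * (c z t)\<^sup>2)
                   \<and>
        dt c z t = dss \<phi> c z t + ds \<phi> c z t * (ds \<phi> a z t / a z t + ds \<phi> b z t / b z t)
                   + 2 * (((a z t)\<^sup>2 - (b z t)\<^sup>2)\<^sup>2 - (c z t) ^ 4) / (c z t * (a z t)\<^sup>2 * (b z t)\<^sup>2)"
    using assms(2) unfolding RF_solution_def by blast
  note P = reg_unfold[OF rp] and A = reg_unfold[OF ra] and B = reg_unfold[OF rb] and C = reg_unfold[OF rc]
  have S1: "\<forall>z t. 0 \<le> t \<and> t < T \<longrightarrow> 0 \<le> 0 + ln (b z t) - ln (a z t)"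
  proof (rule max_princ[where W = "\<lambda>z t. 0 + ln (b z t) - ln (a z t)"])
    show "continuous_on (UNIV \<times> {0..<T}) (\<lambda>p. 0 + ln (b (fst p) (snd p)) - ln (a (fst p) (snd p)))"
      by (rule reg_W(1)[OF ra rb])
    show "\<forall>z t. 0 \<le> t \<and> t < T \<longrightarrow> 0 + ln (b (z + 2*pi) t) - ln (a (z + 2*pi) t) = 0 + ln (b z t) - ln (a z t)"
      by (rule reg_W(2)[OF ra rb])
    show "\<forall>z t. 0 < t \<and> t < T \<longrightarrow> (\<lambda>s. 0 + ln (b z s) - ln (a z s)) differentiable (at t)"
      by (rule reg_W(3)[OF ra rb])
    show "\<forall>z. 0 \<le> 0 + ln (b z 0) - ln (a z 0)"
      using assms(3,5) A(1)[OF order_refl assms(1)] B(1)[OF order_refl assms(1)] by simp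
    show "\<forall>T'. 0 < T' \<and> T' < T \<longrightarrow> (\<exists>M\<ge>0. \<forall>z t. 0 < t \<and> t \<le> T' \<and> 0 + ln (b z t) - ln (a z t) < 0 \<and>
        (\<forall>y. 0 + ln (b z t) - ln (a z t) \<le> 0 + ln (b y t) - ln (a y t)) \<longrightarrow>
        M * (0 + ln (b z t) - ln (a z t)) \<le> deriv (\<lambda>s. 0 + ln (b z s) - ln (a z s)) t)"
    proof (intro allI impI)
      fix T' assume T': "0 < T' \<and> T' < T"
      define H where "H = (\<lambda>z t. ((a z t)\<^sup>2 + (b z t)\<^sup>2 + (c z t)\<^sup>2) / ((b z t)\<^sup>2 * (c z t)\<^sup>2))"
      have "continuous_on (UNIV \<times> {0..<T}) (\<lambda>p. H (fst p) (snd p))"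
        unfolding H_def using B(1) C(1)
        by (intro continuous_intros A(6) B(6) C(6)) (auto simp: less_imp_neq[symmetric])
      moreover have "\<forall>z t. 0 \<le> t \<and> t < T \<longrightarrow> H (z + 2*pi) t = H z t"
        unfolding H_def using A(2) B(2) C(2) by simp
      ultimately obtain B0 where B0: "\<And>z t. 0 \<le> t \<Longrightarrow> t \<le> T' \<Longrightarrow> H z t \<le> B0"
        using periodic_bound T' by blast
      define B1 where "B1 = max B0 0"
      show "\<exists>M\<ge>0. \<forall>z t. 0 < t \<and> t \<le> T' \<and> 0 + ln (b z t) - ln (a z t) < 0 \<and>
        (\<forall>y. 0 + ln (b z t) - ln (a z t) \<le> 0 + ln (b y t) - ln (a y t)) \<longrightarrow>
        M * (0 + ln (b z t) - ln (a z t)) \<le> deriv (\<lambda>s. 0 + ln (b z s) - ln (a z s)) t"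
      proof (rule exI[of _ "8 * B1"], intro conjI allI impI)
        show "0 \<le> 8 * B1" unfolding B1_def by simp
        fix z t assume h: "0 < t \<and> t \<le> T' \<and> 0 + ln (b z t) - ln (a z t) < 0 \<and>
          (\<forall>y. 0 + ln (b z t) - ln (a z t) \<le> 0 + ln (b y t) - ln (a y t))"
        have t: "0 \<le> t" "t < T" "0 < t" using h T' by auto
        have ps: "2 * (((a z t)\<^sup>2 - (c z t)\<^sup>2)\<^sup>2 - (b z t) ^ 4) / (b z t * (a z t)\<^sup>2 * (c z t)\<^sup>2) / b z t
            - 2 * (((b z t)\<^sup>2 - (c z t)\<^sup>2)\<^sup>2 - (a z t) ^ 4) / (a z t * (b z t)\<^sup>2 * (c z t)\<^sup>2) / a z t
            \<le> deriv (\<lambda>s. 0 + ln (b z s) - ln (a z s)) t"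
        proof (rule pair_step[where Q = "ds \<phi> c z t / c z t"])
          show "\<forall>u. 0 < a u t" "\<forall>u. 0 < b u t" "0 < \<phi> z t" using A(1) B(1) P(1) t by auto
          show "\<forall>u. (\<lambda>v. a v t) differentiable (at u)" "\<forall>u. (\<lambda>v. dz a v t) differentiable (at u)"
            "\<forall>u. (\<lambda>v. b v t) differentiable (at u)" "\<forall>u. (\<lambda>v. dz b v t) differentiable (at u)"
            "(\<lambda>v. \<phi> v t) differentiable (at z)"
            using A(3,4) B(3,4) P(3) t by auto
          show "(\<lambda>s. a z s) differentiable (at t)" "(\<lambda>s. b z s) differentiable (at t)"
            using A(5) B(5) t by auto
          show "dt a z t = dss \<phi> a z t + ds \<phi> a z t * (ds \<phi> b z t / b z t + ds \<phi> c z t / c z t)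
                   + 2 * (((b z t)\<^sup>2 - (c z t)\<^sup>2)\<^sup>2 - (a z t) ^ 4) / (a z t * (b z t)\<^sup>2 * (c z t)\<^sup>2)"
            using eqs[OF t(3) t(2)] by blast
          show "dt b z t = dss \<phi> b z t + ds \<phi> b z t * (ds \<phi> a z t / a z t + ds \<phi> c z t / c z t)
                   + 2 * (((a z t)\<^sup>2 - (c z t)\<^sup>2)\<^sup>2 - (b z t) ^ 4) / (b z t * (a z t)\<^sup>2 * (c z t)\<^sup>2)"
            using eqs[OF t(3) t(2)] by blast
          show "\<forall>u. 0 + ln (b z t) - ln (a z t) \<le> 0 + ln (b u t) - ln (a u t)" using h by blast
        qed
        have pa: "0 < a z t" "0 < b z t" "0 < c z t" using A(1) B(1) C(1) t by auto
        have "H z t \<le> B0" using B0[OF t(1)] h by blast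
        then have "H z t \<le> B1" unfolding B1_def by simp
        then have "8 * B1 * (0 + ln (b z t) - ln (a z t)) \<le>
           4 * ((a z t)\<^sup>2 - (b z t)\<^sup>2) * ((a z t)\<^sup>2 + (b z t)\<^sup>2 - (c z t)\<^sup>2) / ((a z t)\<^sup>2 * (b z t)\<^sup>2 * (c z t)\<^sup>2)"
          using h pa unfolding H_def by (intro bound_ab) auto
        then show "8 * B1 * (0 + ln (b z t) - ln (a z t)) \<le> deriv (\<lambda>s. 0 + ln (b z s) - ln (a z s)) t"
          using ps react_ab[OF pa] by linarith
      qed
    qed
  qed
  have ab: "\<And>z t. 0 \<le> t \<Longrightarrow> t < T \<Longrightarrow> a z t \<le> b z t"
    using S1 A(1) B(1) by force
  have S2: "\<forall>z t. 0 \<le> t \<and> t < T \<longrightarrow> 0 \<le> 0 + ln (c z t) - ln (b z t)"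
  proof (rule max_princ[where W = "\<lambda>z t. 0 + ln (c z t) - ln (b z t)"])
    show "continuous_on (UNIV \<times> {0..<T}) (\<lambda>p. 0 + ln (c (fst p) (snd p)) - ln (b (fst p) (snd p)))"
      by (rule reg_W(1)[OF rb rc])
    show "\<forall>z t. 0 \<le> t \<and> t < T \<longrightarrow> 0 + ln (c (z + 2*pi) t) - ln (b (z + 2*pi) t) = 0 + ln (c z t) - ln (b z t)"
      by (rule reg_W(2)[OF rb rc])
    show "\<forall>z t. 0 < t \<and> t < T \<longrightarrow> (\<lambda>s. 0 + ln (c z s) - ln (b z s)) differentiable (at t)"
      by (rule reg_W(3)[OF rb rc])
    show "\<forall>z. 0 \<le> 0 + ln (c z 0) - ln (b z 0)"
      using assms(3) B(1)[OF order_refl assms(1)] C(1)[OF order_refl assms(1)] by simp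
    show "\<forall>T'. 0 < T' \<and> T' < T \<longrightarrow> (\<exists>M\<ge>0. \<forall>z t. 0 < t \<and> t \<le> T' \<and> 0 + ln (c z t) - ln (b z t) < 0 \<and>
        (\<forall>y. 0 + ln (c z t) - ln (b z t) \<le> 0 + ln (c y t) - ln (b y t)) \<longrightarrow>
        M * (0 + ln (c z t) - ln (b z t)) \<le> deriv (\<lambda>s. 0 + ln (c z s) - ln (b z s)) t)"
    proof (intro allI impI)
      fix T' assume T': "0 < T' \<and> T' < T"
      show "\<exists>M\<ge>0. \<forall>z t. 0 < t \<and> t \<le> T' \<and> 0 + ln (c z t) - ln (b z t) < 0 \<and>
        (\<forall>y. 0 + ln (c z t) - ln (b z t) \<le> 0 + ln (c y t) - ln (b y t)) \<longrightarrow>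
        M * (0 + ln (c z t) - ln (b z t)) \<le> deriv (\<lambda>s. 0 + ln (c z s) - ln (b z s)) t"
      proof (rule exI[of _ 0], intro conjI allI impI)
        show "(0::real) \<le> 0" by simp
        fix z t assume h: "0 < t \<and> t \<le> T' \<and> 0 + ln (c z t) - ln (b z t) < 0 \<and>
          (\<forall>y. 0 + ln (c z t) - ln (b z t) \<le> 0 + ln (c y t) - ln (b y t))"
        have t: "0 \<le> t" "t < T" "0 < t" using h T' by auto
        have E: "dt a z t = dss \<phi> a z t + ds \<phi> a z t * (ds \<phi> b z t / b z t + ds \<phi> c z t / c z t)
                   + 2 * (((b z t)\<^sup>2 - (c z t)\<^sup>2)\<^sup>2 - (a z t) ^ 4) / (a z t * (b z t)\<^sup>2 * (c z t)\<^sup>2)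
                   \<and>
        dt b z t = dss \<phi> b z t + ds \<phi> b z t * (ds \<phi> a z t / a z t + ds \<phi> c z t / c z t)
                   + 2 * (((a z t)\<^sup>2 - (c z t)\<^sup>2)\<^sup>2 - (b z t) ^ 4) / (b z t * (a z t)\<^sup>2 * (c z t)\<^sup>2)
                   \<and>
        dt c z t = dss \<phi> c z t + ds \<phi> c z t * (ds \<phi> a z t / a z t + ds \<phi> b z t / b z t)
                   + 2 * (((a z t)\<^sup>2 - (b z t)\<^sup>2)\<^sup>2 - (c z t) ^ 4) / (c z t * (a z t)\<^sup>2 * (b z t)\<^sup>2)"
          using eqs[OF t(3) t(2)] .
        have ps: "2 * (((a z t)\<^sup>2 - (b z t)\<^sup>2)\<^sup>2 - (c z t) ^ 4) / (c z t * (a z t)\<^sup>2 * (b z t)\<^sup>2) / c z t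
            - 2 * (((a z t)\<^sup>2 - (c z t)\<^sup>2)\<^sup>2 - (b z t) ^ 4) / (b z t * (a z t)\<^sup>2 * (c z t)\<^sup>2) / b z t
            \<le> deriv (\<lambda>s. 0 + ln (c z s) - ln (b z s)) t"
        proof (rule pair_step[where Q = "ds \<phi> a z t / a z t"])
          show "\<forall>u. 0 < b u t" "\<forall>u. 0 < c u t" "0 < \<phi> z t" using B(1) C(1) P(1) t by auto
          show "\<forall>u. (\<lambda>v. b v t) differentiable (at u)" "\<forall>u. (\<lambda>v. dz b v t) differentiable (at u)"
            "\<forall>u. (\<lambda>v. c v t) differentiable (at u)" "\<forall>u. (\<lambda>v. dz c v t) differentiable (at u)"
            "(\<lambda>v. \<phi> v t) differentiable (at z)"
            using B(3,4) C(3,4) P(3) t by auto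
          show "(\<lambda>s. b z s) differentiable (at t)" "(\<lambda>s. c z s) differentiable (at t)"
            using B(5) C(5) t by auto
          show "dt b z t = dss \<phi> b z t + ds \<phi> b z t * (ds \<phi> c z t / c z t + ds \<phi> a z t / a z t)
                   + 2 * (((a z t)\<^sup>2 - (c z t)\<^sup>2)\<^sup>2 - (b z t) ^ 4) / (b z t * (a z t)\<^sup>2 * (c z t)\<^sup>2)"
            using E by (simp add: ac_simps)
          show "dt c z t = dss \<phi> c z t + ds \<phi> c z t * (ds \<phi> b z t / b z t + ds \<phi> a z t / a z t)
                   + 2 * (((a z t)\<^sup>2 - (b z t)\<^sup>2)\<^sup>2 - (c z t) ^ 4) / (c z t * (a z t)\<^sup>2 * (b z t)\<^sup>2)"
            using E by (simp add: ac_simps)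
          show "\<forall>u. 0 + ln (c z t) - ln (b z t) \<le> 0 + ln (c u t) - ln (b u t)" using h by blast
        qed
        have pa: "0 < a z t" "0 < b z t" "0 < c z t" using A(1) B(1) C(1) t by auto
        have "a z t \<le> b z t" using ab t by simp
        have "c z t < b z t" using h pa by simp
        then have "(c z t)\<^sup>2 < (b z t)\<^sup>2" using pa by (simp add: power_strict_mono)
        moreover have "(a z t)\<^sup>2 \<le> (b z t)\<^sup>2" using \<open>a z t \<le> b z t\<close> pa by (simp add: power_mono)
        moreover have "0 < (c z t)\<^sup>2" using pa by simp
        ultimately have n1: "(c z t)\<^sup>2 - (b z t)\<^sup>2 \<le> 0" and n2: "(a z t)\<^sup>2 - (b z t)\<^sup>2 - (c z t)\<^sup>2 \<le> 0"
          by linarith+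
        have "0 \<le> ((c z t)\<^sup>2 - (b z t)\<^sup>2) * ((a z t)\<^sup>2 - (b z t)\<^sup>2 - (c z t)\<^sup>2)"
          by (rule mult_nonpos_nonpos[OF n1 n2])
        then have "0 \<le> 4 * (((c z t)\<^sup>2 - (b z t)\<^sup>2) * ((a z t)\<^sup>2 - (b z t)\<^sup>2 - (c z t)\<^sup>2)) / ((a z t)\<^sup>2 * (b z t)\<^sup>2 * (c z t)\<^sup>2)"
          using pa by simp
        then have "0 \<le> 4 * ((c z t)\<^sup>2 - (b z t)\<^sup>2) * ((a z t)\<^sup>2 - (b z t)\<^sup>2 - (c z t)\<^sup>2) / ((a z t)\<^sup>2 * (b z t)\<^sup>2 * (c z t)\<^sup>2)"
          by (simp only: mult.assoc)
        then show "0 * (0 + ln (c z t) - ln (b z t)) \<le> deriv (\<lambda>s. 0 + ln (c z s) - ln (b z s)) t"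
          using ps react_bc[OF pa] by linarith
      qed
    qed
  qed
  have bc: "\<And>z t. 0 \<le> t \<Longrightarrow> t < T \<Longrightarrow> b z t \<le> c z t"
    using S2 B(1) C(1) by force
  have lam0: "0 < lam" using assms(4) by simp
  have S3: "\<forall>z t. 0 \<le> t \<and> t < T \<longrightarrow> 0 \<le> ln lam + ln (a z t) - ln (c z t)"
  proof (rule max_princ[where W = "\<lambda>z t. ln lam + ln (a z t) - ln (c z t)"])
    show "continuous_on (UNIV \<times> {0..<T}) (\<lambda>p. ln lam + ln (a (fst p) (snd p)) - ln (c (fst p) (snd p)))"
      by (rule reg_W(1)[OF rc ra])
    show "\<forall>z t. 0 \<le> t \<and> t < T \<longrightarrow> ln lam + ln (a (z + 2*pi) t) - ln (c (z + 2*pi) t) = ln lam + ln (a z t) - ln (c z t)"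
      by (rule reg_W(2)[OF rc ra])
    show "\<forall>z t. 0 < t \<and> t < T \<longrightarrow> (\<lambda>s. ln lam + ln (a z s) - ln (c z s)) differentiable (at t)"
      by (rule reg_W(3)[OF rc ra])
    show "\<forall>z. 0 \<le> ln lam + ln (a z 0) - ln (c z 0)"
    proof
      fix z
      have pa: "0 < a z 0" "0 < c z 0" using A(1)[OF order_refl assms(1)] C(1)[OF order_refl assms(1)] by auto
      have "c z 0 \<le> lam * a z 0" using assms(7) pa by (simp add: divide_le_eq)
      then have "ln (c z 0) \<le> ln (lam * a z 0)" using pa lam0 by simp
      then show "0 \<le> ln lam + ln (a z 0) - ln (c z 0)" using pa lam0 by (simp add: ln_mult)
    qed
    show "\<forall>T'. 0 < T' \<and> T' < T \<longrightarrow> (\<exists>M\<ge>0. \<forall>z t. 0 < t \<and> t \<le> T' \<and> ln lam + ln (a z t) - ln (c z t) < 0 \<and>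
        (\<forall>y. ln lam + ln (a z t) - ln (c z t) \<le> ln lam + ln (a y t) - ln (c y t)) \<longrightarrow>
        M * (ln lam + ln (a z t) - ln (c z t)) \<le> deriv (\<lambda>s. ln lam + ln (a z s) - ln (c z s)) t)"
    proof (intro allI impI)
      fix T' assume T': "0 < T' \<and> T' < T"
      show "\<exists>M\<ge>0. \<forall>z t. 0 < t \<and> t \<le> T' \<and> ln lam + ln (a z t) - ln (c z t) < 0 \<and>
        (\<forall>y. ln lam + ln (a z t) - ln (c z t) \<le> ln lam + ln (a y t) - ln (c y t)) \<longrightarrow>
        M * (ln lam + ln (a z t) - ln (c z t)) \<le> deriv (\<lambda>s. ln lam + ln (a z s) - ln (c z s)) t"
      proof (rule exI[of _ 0], intro conjI allI impI)
        show "(0::real) \<le> 0" by simp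
        fix z t assume h: "0 < t \<and> t \<le> T' \<and> ln lam + ln (a z t) - ln (c z t) < 0 \<and>
          (\<forall>y. ln lam + ln (a z t) - ln (c z t) \<le> ln lam + ln (a y t) - ln (c y t))"
        have t: "0 \<le> t" "t < T" "0 < t" using h T' by auto
        have E: "dt a z t = dss \<phi> a z t + ds \<phi> a z t * (ds \<phi> b z t / b z t + ds \<phi> c z t / c z t)
                   + 2 * (((b z t)\<^sup>2 - (c z t)\<^sup>2)\<^sup>2 - (a z t) ^ 4) / (a z t * (b z t)\<^sup>2 * (c z t)\<^sup>2)
                   \<and>
        dt b z t = dss \<phi> b z t + ds \<phi> b z t * (ds \<phi> a z t / a z t + ds \<phi> c z t / c z t)
                   + 2 * (((a z t)\<^sup>2 - (c z t)\<^sup>2)\<^sup>2 - (b z t) ^ 4) / (b z t * (a z t)\<^sup>2 * (c z t)\<^sup>2)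
                   \<and>
        dt c z t = dss \<phi> c z t + ds \<phi> c z t * (ds \<phi> a z t / a z t + ds \<phi> b z t / b z t)
                   + 2 * (((a z t)\<^sup>2 - (b z t)\<^sup>2)\<^sup>2 - (c z t) ^ 4) / (c z t * (a z t)\<^sup>2 * (b z t)\<^sup>2)"
          using eqs[OF t(3) t(2)] .
        have ps: "2 * (((b z t)\<^sup>2 - (c z t)\<^sup>2)\<^sup>2 - (a z t) ^ 4) / (a z t * (b z t)\<^sup>2 * (c z t)\<^sup>2) / a z t
            - 2 * (((a z t)\<^sup>2 - (b z t)\<^sup>2)\<^sup>2 - (c z t) ^ 4) / (c z t * (a z t)\<^sup>2 * (b z t)\<^sup>2) / c z t
            \<le> deriv (\<lambda>s. ln lam + ln (a z s) - ln (c z s)) t"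
        proof (rule pair_step[where Q = "ds \<phi> b z t / b z t"])
          show "\<forall>u. 0 < c u t" "\<forall>u. 0 < a u t" "0 < \<phi> z t" using C(1) A(1) P(1) t by auto
          show "\<forall>u. (\<lambda>v. c v t) differentiable (at u)" "\<forall>u. (\<lambda>v. dz c v t) differentiable (at u)"
            "\<forall>u. (\<lambda>v. a v t) differentiable (at u)" "\<forall>u. (\<lambda>v. dz a v t) differentiable (at u)"
            "(\<lambda>v. \<phi> v t) differentiable (at z)"
            using C(3,4) A(3,4) P(3) t by auto
          show "(\<lambda>s. c z s) differentiable (at t)" "(\<lambda>s. a z s) differentiable (at t)"
            using C(5) A(5) t by auto
          show "dt c z t = dss \<phi> c z t + ds \<phi> c z t * (ds \<phi> a z t / a z t + ds \<phi> b z t / b z t)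
                   + 2 * (((a z t)\<^sup>2 - (b z t)\<^sup>2)\<^sup>2 - (c z t) ^ 4) / (c z t * (a z t)\<^sup>2 * (b z t)\<^sup>2)"
            using E by blast
          show "dt a z t = dss \<phi> a z t + ds \<phi> a z t * (ds \<phi> c z t / c z t + ds \<phi> b z t / b z t)
                   + 2 * (((b z t)\<^sup>2 - (c z t)\<^sup>2)\<^sup>2 - (a z t) ^ 4) / (a z t * (b z t)\<^sup>2 * (c z t)\<^sup>2)"
            using E by (simp add: ac_simps)
          show "\<forall>u. ln lam + ln (a z t) - ln (c z t) \<le> ln lam + ln (a u t) - ln (c u t)" using h by blast
        qed
        have pa: "0 < a z t" "0 < b z t" "0 < c z t" using A(1) B(1) C(1) t by auto
        have "b z t \<le> c z t" using bc t by simp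
        have "ln (lam * a z t) < ln (c z t)" using h pa lam0 by (simp add: ln_mult)
        then have "lam * a z t < c z t" using pa lam0 by simp
        moreover have "a z t \<le> lam * a z t" using assms(4) pa by simp
        ultimately have "a z t < c z t" by linarith
        then have "(a z t)\<^sup>2 < (c z t)\<^sup>2" using pa by (simp add: power_strict_mono)
        moreover have "(b z t)\<^sup>2 \<le> (c z t)\<^sup>2" using \<open>b z t \<le> c z t\<close> pa by (simp add: power_mono)
        moreover have "0 < (a z t)\<^sup>2" using pa by simp
        ultimately have n1: "0 \<le> (c z t)\<^sup>2 - (a z t)\<^sup>2" and n2: "0 \<le> (a z t)\<^sup>2 - (b z t)\<^sup>2 + (c z t)\<^sup>2"
          by linarith+
        have "0 \<le> ((c z t)\<^sup>2 - (a z t)\<^sup>2) * ((a z t)\<^sup>2 - (b z t)\<^sup>2 + (c z t)\<^sup>2)"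
          by (rule mult_nonneg_nonneg[OF n1 n2])
        then have "0 \<le> 4 * (((c z t)\<^sup>2 - (a z t)\<^sup>2) * ((a z t)\<^sup>2 - (b z t)\<^sup>2 + (c z t)\<^sup>2)) / ((a z t)\<^sup>2 * (b z t)\<^sup>2 * (c z t)\<^sup>2)"
          using pa by simp
        then have "0 \<le> 4 * ((c z t)\<^sup>2 - (a z t)\<^sup>2) * ((a z t)\<^sup>2 - (b z t)\<^sup>2 + (c z t)\<^sup>2) / ((a z t)\<^sup>2 * (b z t)\<^sup>2 * (c z t)\<^sup>2)"
          by (simp only: mult.assoc)
        then show "0 * (ln lam + ln (a z t) - ln (c z t)) \<le> deriv (\<lambda>s. ln lam + ln (a z s) - ln (c z s)) t"
          using ps react_ca[OF pa] by linarith
      qed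
    qed
  qed
  show ?thesis
  proof (intro allI impI conjI)
    fix z t assume t: "0 \<le> t \<and> t < T"
    have pa: "0 < a z t" "0 < c z t" using A(1) C(1) t by auto
    have "a z t \<le> c z t" using ab[of t z] bc[of t z] t by linarith
    then show "1 \<le> c z t / a z t" using pa by simp
    have "ln (c z t) \<le> ln (lam * a z t)" using S3 t pa lam0 by (simp add: ln_mult)
    then have "c z t \<le> lam * a z t" using pa lam0 by simp
    then show "c z t / a z t \<le> lam" using pa by (simp add: divide_le_eq)
  qed
qed

end
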